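(* Let $m\ge 1$. If $m=2t$ is even, then $\alpha_{m+1,k}=2(2m+1-k)\alpha_{m,k}-(4k-1)\beta_{m,k-1}$ for $1\le k\le t$; $\beta_{m+1,k}=(1+4k)\alpha_{m,k}+(4m+2k+3)\beta_{m,k}$ for $0\le k\le t-1$; $\alpha_{m+1,0}=2(2m+1)\alpha_{m,0}$ and $\beta_{m+1,t}=(1+4t)\alpha_{m,t}$. If $m=2t+1$ is odd, then $\alpha_{m+1,k}=2(2m+1-k)\alpha_{m,k}-(4k-1)\beta_{m,k-1}$ for $1\le k\le t$; $\alpha_{m+1,0}=2(2m+1)\alpha_{m,0}$ and $\alpha_{m+1,t+1}=-(3+4t)\beta_{m,t}$; $\beta_{m+1,k}=(1+4k)\alpha_{m,k}+(4m+2k+3)\beta_{m,k}$ for $0\le k\le t$.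
   Context: $P_m(x)=\sum_{i=0}^m d_i(m)x^i$ with $d_i(m)=2^{-2m}\sum_{k=i}^m 2^k\binom{2m-2k}{m-k}\binom{m+k}{k}\binom{k}{i}$; $Q_m(x)=2^m m!\,x^mP_m(1/x)$ (degree $m$). $(a_m(x),b_m(x))$ is the symmetric decomposition of $Q_m$: $a_m(x)=\frac{Q_m(x)-x^{m+1}Q_m(1/x)}{1-x}$, $b_m(x)=\frac{x^mQ_m(1/x)-Q_m(x)}{1-x}$. The numbers $\alpha_{m,k},\beta_{m,k}$ are the unique coefficients with $a_m(x)=\sum_{k=0}^{\lfloor m/2\rfloor}\alpha_{m,k}x^k(1+x)^{m-2k}$ and $b_m(x)=\sum_{k=0}^{\lfloor (m-1)/2\rfloor}\beta_{m,k}x^k(1+x)^{m-1-2k}$. *)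

theory Defs
  imports "HOL-Computational_Algebra.Polynomial"
begin

definition d :: "nat \<Rightarrow> nat \<Rightarrow> real" where
  "d i m = (1 / 2 ^ (2*m)) * (\<Sum>k=i..m. 2 ^ k * real ((2*m - 2*k) choose (m - k))
              * real ((m + k) choose k) * real (k choose i))"

definition P :: "nat \<Rightarrow> real poly" where
  "P m = (\<Sum>i\<le>m. monom (d i m) i)"

text \<open>revp n p is the polynomial x^n p(1/x), for p of degree at most n.\<close>
definition revp :: "nat \<Rightarrow> real poly \<Rightarrow> real poly" where
  "revp n p = (\<Sum>i\<le>n. monom (coeff p i) (n - i))"

definition Q :: "nat \<Rightarrow> real poly" where
  "Q m = smult (2 ^ m * fact m) (revp m (P m))"

text \<open>Symmetric decomposition; [:1,-1:] is the polynomial 1 - x (division is exact).\<close>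
definition a :: "nat \<Rightarrow> real poly" where
  "a m = (Q m - revp (m + 1) (Q m)) div [:1, -1:]"

definition b :: "nat \<Rightarrow> real poly" where
  "b m = (revp m (Q m) - Q m) div [:1, -1:]"

definition alpha :: "nat \<Rightarrow> nat \<Rightarrow> real" where
  "alpha m = (THE f. (\<forall>k. m div 2 < k \<longrightarrow> f k = 0) \<and>
      a m = (\<Sum>k\<le>m div 2. smult (f k) ([:0, 1:] ^ k * [:1, 1:] ^ (m - 2*k))))"

definition beta :: "nat \<Rightarrow> nat \<Rightarrow> real" where
  "beta m = (THE f. (\<forall>k. (m - 1) div 2 < k \<longrightarrow> f k = 0) \<and>
      b m = (\<Sum>k\<le>(m - 1) div 2. smult (f k) ([:0, 1:] ^ k * [:1, 1:] ^ (m - 1 - 2*k))))"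

end

theory Submission
  imports Defs
begin

lemma sum_swap_tri: "(\<Sum>i\<le>m. \<Sum>k=i..m. F i k) = (\<Sum>k\<le>(m::nat). \<Sum>i\<le>k. (F i k :: real))"
proof -
  have "(\<Sum>i\<le>m. \<Sum>k=i..m. F i k) = (\<Sum>i\<le>m. \<Sum>k\<le>m. if i \<le> k then F i k else 0)"
  proof (rule sum.cong[OF refl])
    fix i assume "i \<in> {..m}"
    have "{k\<in>{..m}. i \<le> k} = {i..m}" by auto
    then show "(\<Sum>k=i..m. F i k) = (\<Sum>k\<le>m. if i \<le> k then F i k else 0)"
      using sum.inter_filter[of "{..m}" "F i" "\<lambda>k. i \<le> k"] by simp
  qed
  also have "\<dots> = (\<Sum>k\<le>m. \<Sum>i\<le>m. if i \<le> k then F i k else 0)" by (rule sum.swap)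
  also have "\<dots> = (\<Sum>k\<le>m. \<Sum>i\<le>k. F i k)"
  proof (rule sum.cong[OF refl])
    fix k assume "k \<in> {..m}"
    then have "{i\<in>{..m}. i \<le> k} = {..k}" by auto
    then show "(\<Sum>i\<le>m. if i \<le> k then F i k else 0) = (\<Sum>i\<le>k. F i k)"
      using sum.inter_filter[of "{..m}" "\<lambda>i. F i k" "\<lambda>i. i \<le> k"] by simp
  qed
  finally show ?thesis .
qed

definition e :: "nat \<Rightarrow> nat \<Rightarrow> real" where
  "e m k = fact m * 2^k / 2^m * real ((2*m - 2*k) choose (m-k)) * real ((m+k) choose k)"

lemma poly_revp: "poly (revp n p) x = (\<Sum>i\<le>n. coeff p i * x^(n-i))"
  by (simp add: revp_def poly_sum poly_monom)

lemma coeff_P: "i \<le> m \<Longrightarrow> coeff (P m) i = d i m"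
  by (simp add: P_def coeff_sum coeff_monom)

lemma binom_shift: "k \<le> m \<Longrightarrow> (\<Sum>i\<le>k. real (k choose i) * x^(m-i)) = x^(m-k) * (1+x)^k"
proof -
  assume km: "k \<le> m"
  have "(1+x)^k = (\<Sum>i\<le>k. real (k choose i) * 1^i * x^(k-i))"
    by (rule binomial_ring)
  then have "x^(m-k) * (1+x)^k = (\<Sum>i\<le>k. real (k choose i) * (x^(m-k) * x^(k-i)))"
    by (simp add: sum_distrib_left algebra_simps)
  also have "\<dots> = (\<Sum>i\<le>k. real (k choose i) * x^(m-i))"
    by (intro sum.cong refl) (use km in \<open>simp add: power_add[symmetric]\<close>)
  finally show ?thesis by simp
qed

lemma Q_eval: "poly (Q m) x = (\<Sum>k\<le>m. e m k * x^(m-k) * (1+x)^k)"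
proof -
  define T where "T k = 2 ^ k * real ((2*m - 2*k) choose (m - k)) * real ((m + k) choose k)" for k
  have "poly (Q m) x = 2^m * fact m * (\<Sum>i\<le>m. d i m * x^(m-i))"
    by (simp add: Q_def poly_revp coeff_P)
  also have "(\<Sum>i\<le>m. d i m * x^(m-i)) = (1/2^(2*m)) * (\<Sum>i\<le>m. \<Sum>k=i..m. T k * real (k choose i) * x^(m-i))"
    by (simp add: d_def T_def sum_distrib_left sum_distrib_right mult.assoc)
  also have "(\<Sum>i\<le>m. \<Sum>k=i..m. T k * real (k choose i) * x^(m-i)) = (\<Sum>k\<le>m. \<Sum>i\<le>k. T k * real (k choose i) * x^(m-i))"
    by (rule sum_swap_tri)
  also have "\<dots> = (\<Sum>k\<le>m. T k * (x^(m-k) * (1+x)^k))"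
    by (intro sum.cong refl) (simp add: binom_shift[symmetric] sum_distrib_left mult.assoc)
  finally have "poly (Q m) x = 2^m * fact m * ((1/2^(2*m)) * (\<Sum>k\<le>m. T k * (x^(m-k) * (1+x)^k)))" .
  also have "\<dots> = (\<Sum>k\<le>m. (2^m/2^(2*m)) * fact m * T k * (x^(m-k) * (1+x)^k))"
    by (simp add: sum_distrib_left mult.assoc)
  also have "(2::real)^m/2^(2*m) = 1/2^m" by (simp add: mult_2 power_add)
  finally show ?thesis
    by (simp add: e_def T_def mult_ac)
qed

lemma e_jk: "e (j+k) k = fact (2*j) * fact (j+2*k) / (fact j ^ 2 * 2^j * fact k)"
proof -
  have a: "2*(j+k) - 2*k = 2*j" "j+k-k = j" "j+k+k = j+2*k" by auto
  have b: "real ((2*j) choose j) = fact (2*j) / (fact j * fact j)"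
    using binomial_fact[of j "2*j"] by (simp add: mult_2)
  have c: "real ((j+2*k) choose k) = fact (j+2*k) / (fact k * fact (j+k))"
    using binomial_fact[of k "j+2*k"] by (simp add: mult_2 add.commute add.left_commute)
  have d: "(2::real)^k / 2^(j+k) = 1/2^j" by (simp add: power_add)
  show ?thesis unfolding e_def a b c
    using d by (simp add: field_simps power2_eq_square)
qed

lemma fact_plus2: "fact (n+2) = (real n + 2) * (real n + 1) * (fact n :: real)"
  by (simp add: fact_Suc numeral_2_eq_2 algebra_simps)
lemma fact_plus1: "fact (n+1) = (real n + 1) * (fact n :: real)"
  by (simp add: fact_Suc algebra_simps)

lemma alg_mid:
  fixes u v A B fj fk p :: real
  assumes "u \<noteq> 0" "v \<noteq> 0" "fj \<noteq> 0" "fk \<noteq> 0" "p \<noteq> 0"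
  shows "(2*u)*(2*u-1)*A*((u+2*v)*(u+2*v-1)*(u+2*v-2)*B) / ((u*fj)^2 * (2*p) * (v*fk))
     = 2*(u+2*v-1) * ((2*u)*(2*u-1)*A*((u+2*v-2)*B) / ((u*fj)^2*(2*p)*fk))
       + (2*u-1)*(A*((u+2*v-1)*(u+2*v-2)*B)/(fj^2*p*(v*fk)))"
  using assms by (simp add: field_simps power2_eq_square)

lemma e_rec_mid: "e (j+1+(k+1)) (k+1) = 2*(real j + 2*real k + 2) * e (j+1+k) k + (2*real j+1) * e (j+(k+1)) (k+1)"
proof -
  have 1: "fact (2*(j+1)) = (2*(real j+1))*(2*(real j+1)-1)* (fact (2*j)::real)"
    using fact_plus2[of "2*j"] by (simp add: algebra_simps)
  have 2: "fact (j+1+2*(k+1)) = ((real j+1) + 2*(real k+1))*((real j+1) + 2*(real k+1)-1)*((real j+1) + 2*(real k+1)-2)* (fact (j+2*k)::real)"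
  proof -
    have "j+1+2*(k+1) = (j+2*k+1)+2" by simp
    then show ?thesis using fact_plus2[of "j+2*k+1"] fact_plus1[of "j+2*k"] by (simp add: algebra_simps)
  qed
  have 3: "fact (j+1+2*k) = ((real j+1) + 2*(real k+1)-2)* (fact (j+2*k)::real)"
    using fact_plus1[of "j+2*k"] by (simp add: algebra_simps)
  have 4: "fact (j+2*(k+1)) = ((real j+1) + 2*(real k+1)-1)*((real j+1) + 2*(real k+1)-2)* (fact (j+2*k)::real)"
  proof -
    have "j+2*(k+1) = (j+2*k)+2" by simp
    then show ?thesis using fact_plus2[of "j+2*k"] by (simp add: algebra_simps)
  qed
  have 5: "fact (j+1) = (real j+1) * (fact j::real)" by (rule fact_plus1)
  have 6: "fact (k+1) = (real k+1) * (fact k::real)" by (rule fact_plus1)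
  have 7: "(2::real)^(j+1) = 2 * 2^j" by simp
  have 8: "2*(real j + 2*real k + 2) = 2*((real j+1) + 2*(real k+1)-1)" "2*real j+1 = 2*(real j+1)-1" by simp_all
  show ?thesis
    unfolding e_jk 1 2 3 4 5 6 7 8
    by (rule alg_mid) auto
qed

lemma e_k0: "e m 0 = fact (2*m) / (fact m * 2^m)"
  using e_jk[of m 0] by (simp add: power2_eq_square)

lemma e_kk: "e m m = fact (2*m) / fact m"
  using e_jk[of 0 m] by simp

lemma e_rec_0: "e (m+1) 0 = (2*real m+1) * e m 0"
proof -
  have 1: "fact (2*(m+1)) = (2*(real m+1))*(2*(real m+1)-1)* (fact (2*m)::real)"
    using fact_plus2[of "2*m"] by (simp add: algebra_simps)
  have 5: "fact (m+1) = (real m+1) * (fact m::real)" by (rule fact_plus1)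
  have p: "real m + 1 \<noteq> 0" "(fact m::real) \<noteq> 0" by auto
  have 7: "(2::real)^(m+1) = 2 * 2^m" "2*real m+1 = 2*(real m+1)-1" by simp_all
  have a: "\<And>u fm F p::real. u \<noteq> 0 \<Longrightarrow> fm \<noteq> 0 \<Longrightarrow> p \<noteq> 0 \<Longrightarrow>
     (2*u)*(2*u-1)*F/((u*fm)*(2*p)) = (2*u-1)*(F/(fm*p))" by (simp add: field_simps)
  show ?thesis unfolding e_k0 1 5 7 using p by (intro a) auto
qed

lemma e_rec_top: "e (m+1) (m+1) = 2*(2*real m+1) * e m m"
proof -
  have 1: "fact (2*(m+1)) = (2*(real m+1))*(2*(real m+1)-1)* (fact (2*m)::real)"
    using fact_plus2[of "2*m"] by (simp add: algebra_simps)
  have 5: "fact (m+1) = (real m+1) * (fact m::real)" by (rule fact_plus1)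
  have p: "real m + 1 \<noteq> 0" "(fact m::real) \<noteq> 0" by auto
  have 7: "2*real m+1 = 2*(real m+1)-1" by simp_all
  have a: "\<And>u fm F::real. u \<noteq> 0 \<Longrightarrow> fm \<noteq> 0 \<Longrightarrow>
     (2*u)*(2*u-1)*F/(u*fm) = 2*(2*u-1)*(F/fm)" by (simp add: field_simps)
  show ?thesis unfolding e_kk 1 5 7 using p by (intro a) auto
qed

abbreviation pX :: "real poly" where "pX \<equiv> [:0,1:]"
abbreviation pY :: "real poly" where "pY \<equiv> [:1,1:]"

definition H :: "nat \<Rightarrow> nat \<Rightarrow> real poly" where "H m k = pX^(m-k) * pY^k"

definition L1 :: "real poly" where "L1 = [:2,3:]"
definition XY :: "real poly" where "XY = pX * pY"
definition Lop :: "nat \<Rightarrow> real poly \<Rightarrow> real poly" where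
  "Lop m p = smult (2*real m+1) (L1 * p) - smult 2 (XY * pderiv p)"

lemma polyeqI: fixes p q :: "real poly" shows "(\<And>x. poly p x = poly q x) \<Longrightarrow> p = q"
  using poly_eq_poly_eq_iff[of p q] by auto

lemma Q_H: "Q m = (\<Sum>k\<le>m. smult (e m k) (H m k))"
  by (rule polyeqI) (simp add: Q_eval poly_sum H_def mult.assoc)

lemma pderiv_X: "pderiv pX = 1" by (simp add: pderiv_pCons)
lemma pderiv_Y: "pderiv pY = 1" by (simp add: pderiv_pCons)

lemma X_pderiv_pow: "pX * pderiv (pX^u) = smult (real u) (pX^u)"
proof (cases u)
  case (Suc n)
  have "pderiv (pX^Suc n) = smult (real (Suc n)) (pX^n)"
    by (simp only: pderiv_power_Suc pderiv_X mult_1_right of_nat_Suc)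
  then show ?thesis using Suc by (simp only: mult_smult_right power_Suc)
qed simp
lemma Y_pderiv_pow: "pY * pderiv (pY^u) = smult (real u) (pY^u)"
proof (cases u)
  case (Suc n)
  have "pderiv (pY^Suc n) = smult (real (Suc n)) (pY^n)"
    by (simp only: pderiv_power_Suc pderiv_Y mult_1_right of_nat_Suc)
  then show ?thesis using Suc by (simp only: mult_smult_right power_Suc)
qed simp

lemma XY_pderiv: "XY * pderiv (pX^u * pY^v) = smult (real u) (pX^u * pY^(v+1)) + smult (real v) (pX^(u+1) * pY^v)"
proof -
  have "XY * pderiv (pX^u * pY^v) = pX^u * pX * (pY * pderiv (pY^v)) + pY^v * pY * (pX * pderiv (pX^u))"
    by (simp add: XY_def pderiv_mult algebra_simps del: mult_pCons_left mult_pCons_right)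
  also have "\<dots> = smult (real u) (pX^u * pY^(v+1)) + smult (real v) (pX^(u+1) * pY^v)"
    by (simp only: X_pderiv_pow Y_pderiv_pow mult_smult_right power_Suc2 power_add power_one_right
          add.commute mult.commute mult.left_commute)
  finally show ?thesis .
qed

lemma Lop_add: "Lop m (p + q) = Lop m p + Lop m q"
  by (simp add: Lop_def pderiv_add algebra_simps smult_add_right)
lemma Lop_smult: "Lop m (smult c p) = smult c (Lop m p)"
  by (simp add: Lop_def pderiv_smult algebra_simps smult_diff_right)
lemma Lop_0: "Lop m 0 = 0" by (simp add: Lop_def)
lemma Lop_sum: "Lop m (sum f A) = (\<Sum>k\<in>A. Lop m (f k))"
  by (induction A rule: infinite_finite_induct) (simp_all add: Lop_0 Lop_add)

lemma Lop_H: assumes "k \<le> m"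
  shows "Lop m (H m k) = smult (2*(real m + real k + 1)) (H (m+1) (k+1)) + smult (2*real m+1-2*real k) (H (m+1) k)"
proof -
  have e1: "m + 1 - (k+1) = m - k" "m+1-k = (m-k)+1" using assms by auto
  have r: "real (m-k) = real m - real k" using assms by simp
  show ?thesis
    unfolding Lop_def H_def XY_pderiv e1 r
    by (rule polyeqI) (simp add: L1_def algebra_simps)
qed

lemma e_rec_mid': assumes "k < m"
  shows "e (m+1) (k+1) = e m k * (2*(real m + real k + 1)) + e m (k+1) * (2*real m+1-2*real (k+1))"
proof -
  define j where "j = m - k - 1"
  have j: "m = j + k + 1" using assms j_def by simp
  have "e (j+1+(k+1)) (k+1) = 2*(real j + 2*real k + 2) * e (j+1+k) k + (2*real j+1) * e (j+(k+1)) (k+1)"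
    by (rule e_rec_mid)
  moreover have "j+1+(k+1) = m+1" "j+1+k = m" "j+(k+1) = m" using j by auto
  ultimately show ?thesis using j by (simp add: algebra_simps)
qed

lemma Q_rec: assumes "m \<ge> 1" shows "Q (m+1) = Lop m (Q m)"
proof -
  obtain n where n: "m = Suc n" using assms by (cases m) auto
  define uc where "uc k = e m k * (2*(real m + real k + 1))" for k
  define tc where "tc k = e m k * (2*real m+1-2*real k)" for k
  have "Lop m (Q m) = (\<Sum>k\<le>m. smult (e m k) (Lop m (H m k)))"
    by (simp add: Q_H Lop_sum Lop_smult)
  also have "\<dots> = (\<Sum>k\<le>m. smult (uc k) (H (m+1) (k+1)) + smult (tc k) (H (m+1) k))"
    by (intro sum.cong refl) (simp add: Lop_H uc_def tc_def smult_add_right)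
  also have "\<dots> = (\<Sum>k\<le>m. smult (uc k) (H (m+1) (k+1))) + (\<Sum>k\<le>m. smult (tc k) (H (m+1) k))"
    by (simp add: sum.distrib)
  also have "(\<Sum>k\<le>m. smult (uc k) (H (m+1) (k+1))) = (\<Sum>k\<le>n. smult (uc k) (H (m+1) (k+1))) + smult (uc m) (H (m+1) (m+1))"
    using n by simp
  also have "(\<Sum>k\<le>m. smult (tc k) (H (m+1) k)) = smult (tc 0) (H (m+1) 0) + (\<Sum>k\<le>n. smult (tc (k+1)) (H (m+1) (k+1)))"
    unfolding n by (subst sum.atMost_Suc_shift) simp
  finally have L: "Lop m (Q m) = smult (tc 0) (H (m+1) 0) + (\<Sum>k\<le>n. smult (uc k + tc (k+1)) (H (m+1) (k+1))) + smult (uc m) (H (m+1) (m+1))"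
    by (simp add: sum.distrib smult_add_left algebra_simps)
  have "Q (m+1) = (\<Sum>k\<le>Suc m. smult (e (m+1) k) (H (m+1) k))" by (simp add: Q_H)
  also have "\<dots> = smult (e (m+1) 0) (H (m+1) 0) + (\<Sum>k\<le>m. smult (e (m+1) (k+1)) (H (m+1) (k+1)))"
    by (subst sum.atMost_Suc_shift) simp
  also have "(\<Sum>k\<le>m. smult (e (m+1) (k+1)) (H (m+1) (k+1))) = (\<Sum>k\<le>n. smult (e (m+1) (k+1)) (H (m+1) (k+1))) + smult (e (m+1) (m+1)) (H (m+1) (m+1))"
    using n by simp
  also have "(\<Sum>k\<le>n. smult (e (m+1) (k+1)) (H (m+1) (k+1))) = (\<Sum>k\<le>n. smult (uc k + tc (k+1)) (H (m+1) (k+1)))"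
  proof (rule sum.cong[OF refl])
    fix k assume "k \<in> {..n}"
    then have "k < m" using n by auto
    then show "smult (e (m+1) (k+1)) (H (m+1) (k+1)) = smult (uc k + tc (k+1)) (H (m+1) (k+1))"
      using e_rec_mid'[of k m] by (simp add: uc_def tc_def)
  qed
  also have "e (m+1) 0 = tc 0" using e_rec_0[of m] by (simp add: tc_def)
  also have "e (m+1) (m+1) = uc m" using e_rec_top[of m] by (simp add: uc_def algebra_simps)
  finally show ?thesis using L by (simp add: algebra_simps)
qed

definition G :: "nat \<Rightarrow> nat \<Rightarrow> real poly" where "G n k = pX^k * pY^(n-2*k)"
definition S :: "nat \<Rightarrow> (nat \<Rightarrow> real) \<Rightarrow> real poly" where
  "S n f = (\<Sum>k\<le>n div 2. smult (f k) (G n k))"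

lemma Lop_G1: assumes "2*k \<le> m"
  shows "Lop m (G m k) = smult (2*(2*real m+1-real k)) (G (m+1) k) + smult (1+4*real k) (pX * G m k)"
proof -
  have e1: "m+1-2*k = (m-2*k)+1" using assms by auto
  have r: "real (m-2*k) = real m - 2*real k" using assms by simp
  show ?thesis
    unfolding Lop_def G_def XY_pderiv e1 r
    by (rule polyeqI) (simp add: L1_def algebra_simps)
qed

lemma Lop_G2: assumes "2*k+1 \<le> m"
  shows "Lop m (pX * G (m-1) k) = smult (-(4*real k+3)) (G (m+1) (k+1)) + smult (4*real m+2*real k+3) (pX * G m k)"
proof -
  have e0: "pX * G (m-1) k = pX^(k+1) * pY^(m-1-2*k)" by (simp add: G_def)
  have e1: "m+1-2*(k+1) = m-1-2*k" "m-2*k = (m-1-2*k)+1" using assms by auto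
  have r: "real (m-1-2*k) = real m - 1 - 2*real k" using assms by simp
  show ?thesis
    unfolding e0 Lop_def XY_pderiv
    unfolding G_def e1 r
    by (rule polyeqI) (simp add: L1_def algebra_simps)
qed

definition nf :: "nat \<Rightarrow> (nat \<Rightarrow> real) \<Rightarrow> (nat \<Rightarrow> real) \<Rightarrow> nat \<Rightarrow> real" where
  "nf m f g k = 2*(2*real m+1-real k)*f k - (if k = 0 then 0 else (4*real k-1)*g (k-1))"
definition ng :: "nat \<Rightarrow> (nat \<Rightarrow> real) \<Rightarrow> (nat \<Rightarrow> real) \<Rightarrow> nat \<Rightarrow> real" where
  "ng m f g k = (1+4*real k)*f k + (4*real m+2*real k+3)*g k"

lemma S_ext: assumes "\<forall>k. n div 2 < k \<longrightarrow> f k = 0" "n div 2 \<le> N"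
  shows "S n f = (\<Sum>k\<le>N. smult (f k) (G n k))"
  unfolding S_def using assms by (intro sum.mono_neutral_right[symmetric]) auto

lemma nf_zero:
  assumes m: "m \<ge> 1" and f: "\<forall>k. m div 2 < k \<longrightarrow> f k = 0" and g: "\<forall>k. (m-1) div 2 < k \<longrightarrow> g k = 0"
  shows "\<forall>k. (m+1) div 2 < k \<longrightarrow> nf m f g k = 0"
  proof (intro allI impI)
    fix k assume k: "(m+1) div 2 < k"
    then have "f k = 0" using f by auto
    moreover have "k \<noteq> 0" using k by auto
    moreover have "g (k-1) = 0"
    proof -
      have "m + 1 < k*2" using k by (simp add: div_less_iff_less_mult)
      then have "m - 1 < (k-1)*2" using m by (simp add: diff_mult_distrib)
      then have "(m-1) div 2 < k-1" by (simp add: div_less_iff_less_mult)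
      then show ?thesis using g by auto
    qed
    ultimately show "nf m f g k = 0" by (simp add: nf_def)
  qed

lemma ng_zero:
  assumes f: "\<forall>k. m div 2 < k \<longrightarrow> f k = 0" and g: "\<forall>k. (m-1) div 2 < k \<longrightarrow> g k = 0"
  shows "\<forall>k. m div 2 < k \<longrightarrow> ng m f g k = 0"
  using f g by (auto simp: ng_def)

lemma step:
  assumes m: "m \<ge> 1" and f: "\<forall>k. m div 2 < k \<longrightarrow> f k = 0" and g: "\<forall>k. (m-1) div 2 < k \<longrightarrow> g k = 0"
  shows "Lop m (S m f + pX * S (m-1) g) = S (m+1) (nf m f g) + pX * S m (ng m f g)"
proof -
  obtain n where n: "m = Suc n" using m by (cases m) auto
  have gm: "g m = 0" using g m by auto
  define A1 where "A1 = (\<Sum>k\<le>m. smult (2*(2*real m+1-real k) * f k) (G (m+1) k))"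
  define A2 where "A2 = (\<Sum>k\<le>m. smult ((1+4*real k) * f k + (4*real m+2*real k+3) * g k) (pX * G m k))"
  define A3 where "A3 = (\<Sum>k\<le>n. smult ((4*real k+3) * g k) (G (m+1) (k+1)))"
  have "Lop m (S m f + pX * S (m-1) g) =
     (\<Sum>k\<le>m. smult (f k) (Lop m (G m k))) + (\<Sum>k\<le>m. smult (g k) (Lop m (pX * G (m-1) k)))"
  proof -
    have e1: "S m f = (\<Sum>k\<le>m. smult (f k) (G m k))" using f by (intro S_ext) auto
    have e2: "S (m-1) g = (\<Sum>k\<le>m. smult (g k) (G (m-1) k))" using g by (intro S_ext) auto
    have e3: "pX * S (m-1) g = (\<Sum>k\<le>m. smult (g k) (pX * G (m-1) k))"
      by (simp only: e2 sum_distrib_left mult_smult_right)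
    show ?thesis by (simp only: e1 e3 Lop_add Lop_sum Lop_smult)
  qed
  also have "(\<Sum>k\<le>m. smult (f k) (Lop m (G m k))) = (\<Sum>k\<le>m. smult (2*(2*real m+1-real k) * f k) (G (m+1) k) + smult ((1+4*real k) * f k) (pX * G m k))"
  proof (rule sum.cong[OF refl])
    fix k assume "k \<in> {..m}"
    show "smult (f k) (Lop m (G m k)) = smult (2*(2*real m+1-real k) * f k) (G (m+1) k) + smult ((1+4*real k) * f k) (pX * G m k)"
    proof (cases "2*k \<le> m")
      case True then show ?thesis by (simp add: Lop_G1 smult_add_right mult.commute)
    next
      case False then have "f k = 0" using f by auto
      then show ?thesis by simp
    qed
  qed
  also have "(\<Sum>k\<le>m. smult (g k) (Lop m (pX * G (m-1) k))) = (\<Sum>k\<le>m. smult (-((4*real k+3) * g k)) (G (m+1) (k+1)) + smult ((4*real m+2*real k+3) * g k) (pX * G m k))"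
  proof (rule sum.cong[OF refl])
    fix k assume "k \<in> {..m}"
    show "smult (g k) (Lop m (pX * G (m-1) k)) = smult (-((4*real k+3) * g k)) (G (m+1) (k+1)) + smult ((4*real m+2*real k+3) * g k) (pX * G m k)"
    proof (cases "2*k+1 \<le> m")
      case True then show ?thesis by (subst Lop_G2[OF True]) (simp add: smult_add_right mult.commute smult_minus_left[symmetric] algebra_simps del: smult_minus_left)
    next
      case False then have "(m-1) div 2 < k" using m by (simp add: div_less_iff_less_mult)
      then have "g k = 0" using g by auto
      then show ?thesis by simp
    qed
  qed
  also have "(\<Sum>k\<le>m. smult (-((4*real k+3) * g k)) (G (m+1) (k+1)) + smult ((4*real m+2*real k+3) * g k) (pX * G m k))
     = - A3 + (\<Sum>k\<le>m. smult ((4*real m+2*real k+3) * g k) (pX * G m k))"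
    using gm unfolding A3_def n by (simp add: sum.distrib sum_negf sum_subtractf)
  finally have L0: "Lop m (S m f + pX * S (m-1) g) = (\<Sum>k\<le>m. smult (2*(2*real m+1-real k) * f k) (G (m+1) k) + smult ((1+4*real k) * f k) (pX * G m k)) + (- A3 + (\<Sum>k\<le>m. smult ((4*real m+2*real k+3) * g k) (pX * G m k)))" .
  have A2': "A2 = (\<Sum>k\<le>m. smult ((1+4*real k) * f k) (pX * G m k)) + (\<Sum>k\<le>m. smult ((4*real m+2*real k+3) * g k) (pX * G m k))"
    unfolding A2_def by (simp only: smult_add_left sum.distrib)
  have L: "Lop m (S m f + pX * S (m-1) g) = A1 + A2 - A3"
    unfolding L0 A2' A1_def by (simp only: sum.distrib)
  have nfz: "\<forall>k. (m+1) div 2 < k \<longrightarrow> nf m f g k = 0" using nf_zero[OF m f g] .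
  have ngz: "\<forall>k. m div 2 < k \<longrightarrow> ng m f g k = 0" using ng_zero[OF f g] .
  have "S (m+1) (nf m f g) = (\<Sum>k\<le>m. smult (nf m f g k) (G (m+1) k))"
    using nfz m by (intro S_ext) auto
  also have "\<dots> = A1 - (\<Sum>k\<le>m. smult (if k = 0 then 0 else (4*real k-1)*g (k-1)) (G (m+1) k))"
    unfolding A1_def nf_def by (simp add: smult_diff_left sum_subtractf)
  also have "(\<Sum>k\<le>m. smult (if k = 0 then 0 else (4*real k-1)*g (k-1)) (G (m+1) k)) = A3"
    unfolding A3_def n by (subst sum.atMost_Suc_shift) (simp add: algebra_simps)
  finally have R1: "S (m+1) (nf m f g) = A1 - A3" .
  have R2: "pX * S m (ng m f g) = A2"
    using ngz m unfolding A2_def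
    by (simp add: S_ext[of m _ m] ng_def sum_distrib_left mult_smult_right)
  show ?thesis using L R1 R2 by simp
qed

lemma polyeqI_nz: fixes p q :: "real poly" assumes "\<And>x. x \<noteq> 0 \<Longrightarrow> poly p x = poly q x" shows "p = q"
proof (rule ccontr)
  assume "p \<noteq> q"
  then have "p - q \<noteq> 0" by simp
  then have fin: "finite {x. poly (p - q) x = 0}" by (rule poly_roots_finite)
  have "- {0} \<subseteq> {x. poly (p - q) x = 0}" using assms by auto
  then have "finite (- {0::real})" using fin finite_subset by blast
  then have "finite (insert 0 (- {0::real}))" by simp
  moreover have "insert 0 (- {0::real}) = UNIV" by auto
  ultimately show False by (simp add: infinite_UNIV_char_0)
qed

lemma poly_G: "poly (G n k) x = x^k * (1+x)^(n-2*k)"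
  by (simp add: G_def)

lemma degree_G: "2*k \<le> n \<Longrightarrow> degree (G n k) \<le> n"
proof -
  assume h: "2*k \<le> n"
  have "degree (G n k) \<le> degree (pX^k) + degree (pY^(n-2*k))" unfolding G_def by (rule degree_mult_le)
  also have "\<dots> \<le> k + (n - 2*k)" using degree_power_le[of pX k] degree_power_le[of pY "n-2*k"] by simp
  finally show ?thesis using h by simp
qed

lemma degree_S: "degree (S n f) \<le> n"
  unfolding S_def
  by (intro degree_sum_le) (auto intro: order.trans[OF degree_smult_le] degree_G)

lemma degree_XS: "n \<ge> 1 \<Longrightarrow> degree (pX * S (n-1) f) \<le> n"
proof -
  assume "n \<ge> 1"
  have "degree (pX * S (n-1) f) \<le> degree pX + degree (S (n-1) f)" by (rule degree_mult_le)
  also have "\<dots> \<le> 1 + (n-1)" using degree_S[of "n-1" f] by simp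
  finally show ?thesis using \<open>n \<ge> 1\<close> by simp
qed

lemma poly_revp_eval: assumes "degree p \<le> N" "x \<noteq> 0"
  shows "poly (revp N p) x = x^N * poly p (1/x)"
proof -
  have "poly p (1/x) = poly (\<Sum>i\<le>N. monom (coeff p i) i) (1/x)"
    using poly_as_sum_of_monoms'[OF assms(1)] by simp
  also have "\<dots> = (\<Sum>i\<le>N. coeff p i * (1/x)^i)" by (simp add: poly_sum poly_monom)
  finally have "x^N * poly p (1/x) = (\<Sum>i\<le>N. coeff p i * (x^N * (1/x)^i))"
    by (simp add: sum_distrib_left mult_ac)
  also have "\<dots> = (\<Sum>i\<le>N. coeff p i * x^(N-i))"
  proof (rule sum.cong[OF refl])
    fix i assume "i \<in> {..N}"
    then have "x^N = x^(N-i) * x^i" by (simp add: power_add[symmetric])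
    then show "coeff p i * (x^N * (1/x)^i) = coeff p i * x^(N-i)"
      using assms(2) by (simp add: power_one_over field_simps)
  qed
  finally show ?thesis by (simp add: poly_revp)
qed

lemma sym_G: assumes "2*k \<le> n" "x \<noteq> 0"
  shows "x^n * poly (G n k) (1/x) = poly (G n k) x"
proof -
  obtain r where r: "n = 2*k + r" using assms(1) le_Suc_ex by blast
  have nr: "n - 2*k = r" using r by simp
  have xn: "x^n = x^k*x^k*x^r" by (simp add: r power_add mult_2)
  have "x^n * poly (G n k) (1/x) = x^k * (x^k * (1/x)^k) * (x^r * (1 + 1/x)^r)"
    unfolding poly_G nr xn by (simp add: mult_ac)
  also have "x^k * (1/x)^k = 1" using assms(2) by (simp add: power_one_over)
  also have "x^r * (1 + 1/x)^r = (1+x)^r"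
    using assms(2) by (simp add: power_mult_distrib[symmetric] field_simps)
  finally show ?thesis unfolding poly_G nr by simp
qed

lemma sym_S: assumes "x \<noteq> 0" shows "x^n * poly (S n f) (1/x) = poly (S n f) x"
proof -
  have "x^n * poly (S n f) (1/x) = (\<Sum>k\<le>n div 2. f k * (x^n * poly (G n k) (1/x)))"
    by (simp add: S_def poly_sum sum_distrib_left mult_ac)
  also have "\<dots> = (\<Sum>k\<le>n div 2. f k * poly (G n k) x)"
    by (intro sum.cong refl) (use assms in \<open>auto simp: sym_G\<close>)
  finally show ?thesis by (simp add: S_def poly_sum)
qed

lemma decomp:
  assumes n: "n \<ge> 1" and q: "Q n = S n f + pX * S (n-1) g"
  shows "a n = S n f" "b n = S (n-1) g"
proof -
  have dq: "degree (Q n) \<le> n" unfolding q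
    using degree_S[of n f] degree_XS[OF n, of g] by (intro degree_add_le) auto
  have r1: "revp (n+1) (Q n) = pX * (S n f + S (n-1) g)"
  proof (rule polyeqI_nz)
    fix x :: real assume x: "x \<noteq> 0"
    have "poly (revp (n+1) (Q n)) x = x^(n+1) * poly (Q n) (1/x)"
      using dq x by (intro poly_revp_eval) auto
    also have "\<dots> = x * (x^n * poly (S n f) (1/x)) + x * (x^(n-1) * poly (S (n-1) g) (1/x))"
    proof -
      have "x^(n+1) = x * x^n" by simp
      moreover have "x^n = x * x^(n-1)" using n by (simp add: power_eq_if)
      ultimately have "x^(n+1) * (1/x) = x * x^(n-1)" using x by simp
      then show ?thesis unfolding q using x by (simp add: algebra_simps)
    qed
    also have "\<dots> = poly (pX * (S n f + S (n-1) g)) x" using x by (simp add: sym_S algebra_simps)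
    finally show "poly (revp (n+1) (Q n)) x = poly (pX * (S n f + S (n-1) g)) x" .
  qed
  have r0: "revp n (Q n) = S n f + S (n-1) g"
  proof (rule polyeqI_nz)
    fix x :: real assume x: "x \<noteq> 0"
    have "poly (revp n (Q n)) x = x^n * poly (Q n) (1/x)"
      using dq x by (intro poly_revp_eval) auto
    also have "\<dots> = x^n * poly (S n f) (1/x) + (x^(n-1) * poly (S (n-1) g) (1/x))"
    proof -
      have xn: "x^n = x * x^(n-1)" using n by (simp add: power_eq_if)
      have "x^n * poly (Q n) (1/x) = x^n * poly (S n f) (1/x) + (x * (1/x)) * (x^(n-1) * poly (S (n-1) g) (1/x))"
        unfolding q by (simp add: xn algebra_simps)
      then show ?thesis using x by simp
    qed
    also have "\<dots> = poly (S n f + S (n-1) g) x" using x by (simp add: sym_S)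
    finally show "poly (revp n (Q n)) x = poly (S n f + S (n-1) g) x" .
  qed
  have nz: "[:1, -1:] \<noteq> (0::real poly)" by simp
  have "Q n - revp (n+1) (Q n) = Q n - pX * (S n f + S (n-1) g)" by (simp only: r1)
  also have "\<dots> = [:1,-1:] * S n f"
    unfolding q by (rule polyeqI) (simp add: algebra_simps)
  finally have ea: "Q n - revp (n+1) (Q n) = [:1,-1:] * S n f" .
  show "a n = S n f" unfolding a_def ea using nz by (rule nonzero_mult_div_cancel_left)
  have "revp n (Q n) - Q n = (S n f + S (n-1) g) - Q n" by (simp only: r0)
  also have "\<dots> = [:1,-1:] * S (n-1) g"
    unfolding q by (rule polyeqI) (simp add: algebra_simps)
  finally have eb: "revp n (Q n) - Q n = [:1,-1:] * S (n-1) g" .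
  show "b n = S (n-1) g" unfolding b_def eb using nz by (rule nonzero_mult_div_cancel_left)
qed

lemma S_indep: "S n h = 0 \<Longrightarrow> k \<le> n div 2 \<Longrightarrow> h k = 0"
proof (induction n arbitrary: h k rule: less_induct)
  case (less n)
  show ?case
  proof (cases "n < 2")
    case True
    then have "n div 2 = 0" by simp
    then have "S n h = smult (h 0) (pY^n)" by (simp add: S_def G_def)
    moreover have "pY^n \<noteq> 0" by simp
    ultimately have "h 0 = 0" using less.prems(1) by simp
    then show ?thesis using less.prems(2) \<open>n div 2 = 0\<close> by simp
  next
    case False
    then obtain n' where n': "n = n' + 2" by (metis add.commute le_Suc_ex not_less)
    have nd: "n div 2 = Suc (n' div 2)" using n' by simp
    have h0: "h 0 = 0"
    proof -
      have "poly (S n h) 0 = h 0" unfolding S_def nd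
        by (subst sum.atMost_Suc_shift) (simp add: poly_sum poly_G)
      then show ?thesis using less.prems(1) by simp
    qed
    have "S n h = smult (h 0) (G n 0) + (\<Sum>k\<le>n' div 2. smult (h (Suc k)) (G n (Suc k)))"
      unfolding S_def nd by (rule sum.atMost_Suc_shift)
    also have "(\<Sum>k\<le>n' div 2. smult (h (Suc k)) (G n (Suc k))) = pX * S n' (\<lambda>k. h (Suc k))"
    proof -
      have "\<And>k. G n (Suc k) = pX * G n' k"
      proof -
        fix k have "n - 2 * Suc k = n' - 2*k" using n' by simp
        then show "G n (Suc k) = pX * G n' k" by (simp add: G_def)
      qed
      then show ?thesis by (simp add: S_def sum_distrib_left mult_smult_right)
    qed
    finally have "pX * S n' (\<lambda>k. h (Suc k)) = 0" using h0 less.prems(1) by simp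
    then have z: "S n' (\<lambda>k. h (Suc k)) = 0" by simp
    show ?thesis
    proof (cases k)
      case 0 then show ?thesis using h0 by simp
    next
      case (Suc k')
      then have "k' \<le> n' div 2" using less.prems(2) nd by simp
      then show ?thesis using less.IH[of n' "\<lambda>k. h (Suc k)" k'] z n' Suc by simp
    qed
  qed
qed

lemma S_unique:
  assumes "\<forall>k. n div 2 < k \<longrightarrow> f k = 0" "\<forall>k. n div 2 < k \<longrightarrow> g k = 0" "S n f = S n g"
  shows "f = g"
proof
  fix k
  have "S n (\<lambda>k. f k - g k) = S n f - S n g" by (simp add: S_def smult_diff_left sum_subtractf)
  then have "S n (\<lambda>k. f k - g k) = 0" using assms(3) by simp
  then have "k \<le> n div 2 \<Longrightarrow> f k - g k = 0" by (rule S_indep)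
  then show "f k = g k" using assms(1,2) by (cases "k \<le> n div 2") auto
qed

lemma alpha_eq: assumes "a m = S m f" "\<forall>k. m div 2 < k \<longrightarrow> f k = 0" shows "alpha m = f"
  unfolding alpha_def
proof (rule the_equality)
  show "(\<forall>k. m div 2 < k \<longrightarrow> f k = 0) \<and> a m = (\<Sum>k\<le>m div 2. smult (f k) ([:0, 1:] ^ k * [:1, 1:] ^ (m - 2*k)))"
    using assms by (simp add: S_def G_def)
next
  fix f' assume "(\<forall>k. m div 2 < k \<longrightarrow> f' k = 0) \<and> a m = (\<Sum>k\<le>m div 2. smult (f' k) ([:0, 1:] ^ k * [:1, 1:] ^ (m - 2*k)))"
  then show "f' = f" using assms S_unique[of m f' f] by (simp add: S_def G_def)
qed

lemma beta_eq: assumes "b m = S (m-1) g" "\<forall>k. (m-1) div 2 < k \<longrightarrow> g k = 0" shows "beta m = g"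
  unfolding beta_def
proof (rule the_equality)
  show "(\<forall>k. (m-1) div 2 < k \<longrightarrow> g k = 0) \<and> b m = (\<Sum>k\<le>(m-1) div 2. smult (g k) ([:0, 1:] ^ k * [:1, 1:] ^ (m - 1 - 2*k)))"
    using assms by (simp add: S_def G_def)
next
  fix f' assume "(\<forall>k. (m-1) div 2 < k \<longrightarrow> f' k = 0) \<and> b m = (\<Sum>k\<le>(m-1) div 2. smult (f' k) ([:0, 1:] ^ k * [:1, 1:] ^ (m - 1 - 2*k)))"
  then show "f' = g" using assms S_unique[of "m-1" f' g] by (simp add: S_def G_def)
qed

definition Inv :: "nat \<Rightarrow> (nat \<Rightarrow> real) \<Rightarrow> (nat \<Rightarrow> real) \<Rightarrow> bool" where
  "Inv m f g \<longleftrightarrow> (\<forall>k. m div 2 < k \<longrightarrow> f k = 0) \<and> (\<forall>k. (m-1) div 2 < k \<longrightarrow> g k = 0) \<and> Q m = S m f + pX * S (m-1) g"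

lemma Inv_step: assumes "m \<ge> 1" "Inv m f g" shows "Inv (m+1) (nf m f g) (ng m f g)"
proof -
  have f: "\<forall>k. m div 2 < k \<longrightarrow> f k = 0" and g: "\<forall>k. (m-1) div 2 < k \<longrightarrow> g k = 0"
    and q: "Q m = S m f + pX * S (m-1) g" using assms(2) by (auto simp: Inv_def)
  have "Q (m+1) = S (m+1) (nf m f g) + pX * S m (ng m f g)"
    using Q_rec[OF assms(1)] step[OF assms(1) f g] q by simp
  then show ?thesis using nf_zero[OF assms(1) f g] ng_zero[OF f g] by (simp add: Inv_def)
qed

lemma Inv_base: "Inv 1 (\<lambda>k. if k = 0 then 2 else 0) (\<lambda>k. if k = 0 then 1 else 0)"
proof -
  have e10: "e 1 0 = 1" by (simp add: e_def)
  have e11: "e 1 1 = 2" by (simp add: e_def)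
  have "Q 1 = smult (e 1 0) (H 1 0) + smult (e 1 1) (H 1 1)" by (simp add: Q_H)
  also have "\<dots> = S 1 (\<lambda>k. if k = 0 then 2 else 0) + pX * S 0 (\<lambda>k. if k = 0 then 1 else 0)"
    unfolding e10 e11 by (rule polyeqI) (simp add: S_def G_def H_def algebra_simps)
  finally show ?thesis by (auto simp: Inv_def)
qed

lemma Inv_exists: "m \<ge> 1 \<Longrightarrow> \<exists>f g. Inv m f g"
proof (induction m rule: dec_induct)
  case base then show ?case using Inv_base by blast
next
  case (step m) then show ?case using Inv_step by (metis Suc_eq_plus1)
qed

lemma Inv_alpha_beta: assumes "m \<ge> 1" "Inv m f g" shows "alpha m = f" "beta m = g"
proof -
  have f: "\<forall>k. m div 2 < k \<longrightarrow> f k = 0" and g: "\<forall>k. (m-1) div 2 < k \<longrightarrow> g k = 0"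
    and q: "Q m = S m f + pX * S (m-1) g" using assms(2) by (auto simp: Inv_def)
  show "alpha m = f" using alpha_eq[OF decomp(1)[OF assms(1) q] f] .
  show "beta m = g" using beta_eq[OF decomp(2)[OF assms(1) q] g] .
qed

theorem lemma3p2:
  fixes m t :: nat
  assumes "m \<ge> 1"
  shows "(m = 2*t \<longrightarrow>
      (\<forall>k. 1 \<le> k \<and> k \<le> t \<longrightarrow>
          alpha (m+1) k = 2 * (2 * real m + 1 - real k) * alpha m k - (4 * real k - 1) * beta m (k - 1)) \<and>
      (\<forall>k. k \<le> t - 1 \<longrightarrow>
          beta (m+1) k = (1 + 4 * real k) * alpha m k + (4 * real m + 2 * real k + 3) * beta m k) \<and>
      alpha (m+1) 0 = 2 * (2 * real m + 1) * alpha m 0 \<and>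
      beta (m+1) t = (1 + 4 * real t) * alpha m t)
    \<and> (m = 2*t + 1 \<longrightarrow>
      (\<forall>k. 1 \<le> k \<and> k \<le> t \<longrightarrow>
          alpha (m+1) k = 2 * (2 * real m + 1 - real k) * alpha m k - (4 * real k - 1) * beta m (k - 1)) \<and>
      alpha (m+1) 0 = 2 * (2 * real m + 1) * alpha m 0 \<and>
      alpha (m+1) (t+1) = - (3 + 4 * real t) * beta m t \<and>
      (\<forall>k. k \<le> t \<longrightarrow>
          beta (m+1) k = (1 + 4 * real k) * alpha m k + (4 * real m + 2 * real k + 3) * beta m k))"
proof -
  obtain f g where I: "Inv m f g" using Inv_exists[OF assms] by blast
  have f: "\<forall>k. m div 2 < k \<longrightarrow> f k = 0" and g: "\<forall>k. (m-1) div 2 < k \<longrightarrow> g k = 0"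
    using I by (auto simp: Inv_def)
  have am: "alpha m = f" and bm: "beta m = g" using Inv_alpha_beta[OF assms I] by auto
  have I1: "Inv (m+1) (nf m f g) (ng m f g)" using Inv_step[OF assms I] .
  have am1: "alpha (Suc m) = nf m f g" and bm1: "beta (Suc m) = ng m f g"
    using Inv_alpha_beta[OF _ I1] by auto
  show ?thesis
  proof (intro conjI impI)
    assume mt: "m = 2*t"
    show "\<forall>k. 1 \<le> k \<and> k \<le> t \<longrightarrow>
          alpha (m+1) k = 2 * (2 * real m + 1 - real k) * alpha m k - (4 * real k - 1) * beta m (k - 1)"
      by (auto simp: am bm am1 nf_def)
    show "\<forall>k. k \<le> t - 1 \<longrightarrow>
          beta (m+1) k = (1 + 4 * real k) * alpha m k + (4 * real m + 2 * real k + 3) * beta m k"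
      by (auto simp: am bm bm1 ng_def)
    show "alpha (m+1) 0 = 2 * (2 * real m + 1) * alpha m 0"
      by (simp add: am am1 nf_def)
    have "(m-1) div 2 < t" using mt assms by simp
    then have "g t = 0" using g by auto
    then show "beta (m+1) t = (1 + 4 * real t) * alpha m t"
      by (simp add: am bm1 ng_def)
  next
    assume mt: "m = 2*t+1"
    show "\<forall>k. 1 \<le> k \<and> k \<le> t \<longrightarrow>
          alpha (m+1) k = 2 * (2 * real m + 1 - real k) * alpha m k - (4 * real k - 1) * beta m (k - 1)"
      by (auto simp: am bm am1 nf_def)
    show "alpha (m+1) 0 = 2 * (2 * real m + 1) * alpha m 0"
      by (simp add: am am1 nf_def)
    have "m div 2 < t+1" using mt by simp
    then have "f (t+1) = 0" using f by auto
    then show "alpha (m+1) (t+1) = - (3 + 4 * real t) * beta m t"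
      by (simp add: bm am1 nf_def algebra_simps)
    show "\<forall>k. k \<le> t \<longrightarrow>
          beta (m+1) k = (1 + 4 * real k) * alpha m k + (4 * real m + 2 * real k + 3) * beta m k"
      by (auto simp: am bm bm1 ng_def)
  qed
qed

end
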